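(* Let $f\in\mathcal A_C$ and $g\in L^1$, and define $F(x)=\int_{-\infty}^xf$ and $G(x)=\int_{-\infty}^xg$. Then $f*G\in C^0(\overline{\mathbb R})$ and $f*G(x)=F*g(x)$ for all $x\in\mathbb R$, where $F*g(x)=\int_{-\infty}^\infty F(x-y)g(y)\,dy$ is a Lebesgue integral.
   Context: $C^0(\overline{\mathbb R})$: continuous $F:\mathbb R\to\mathbb R$ with finite limits $F(\pm\infty)$. $\mathcal B_C=\{F\in C^0(\overline{\mathbb R}):F(-\infty)=0\}$; $\mathcal A_C=\{f\in\mathcal D'(\mathbb R): f=F'\text{ (distributional derivative) for some } F\in\mathcal B_C\}$, the primitive being unique, $\int_a^bf=F(b)-F(a)$. Note $G$ is absolutely continuous and of bounded variation. For $h\in\mathcal A_C$ with primitive $H$ and $g$ of bounded variation, $\int_{-\infty}^\infty hg=H(\infty)g(\infty)-\int_{-\infty}^\infty H\,dg$ (Henstock–Stieltjes). For $f\in\mathcal A_C$ with primitive $F$, $f(x-\cdot)$ is the element of $\mathcal A_C$ with primitive $y\mapsto F(\infty)-F(x-y)$, and for $G$ of bounded variation $f*G(x)=\int_{-\infty}^\infty f(x-y)G(y)\,dy$ is the product integral of $f(x-\cdot)$ and $G$. *)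

theory Defs
  imports "HOL-Analysis.Analysis"
begin

text \<open>C^0 of the extended real line: continuous with finite limits at both infinities.\<close>
definition C0_ext :: "(real \<Rightarrow> real) \<Rightarrow> bool" where
  "C0_ext F \<longleftrightarrow> continuous_on UNIV F \<and> (\<exists>l. (F \<longlongrightarrow> l) at_top) \<and> (\<exists>l. (F \<longlongrightarrow> l) at_bot)"

definition B_C :: "(real \<Rightarrow> real) \<Rightarrow> bool" where
  "B_C F \<longleftrightarrow> C0_ext F \<and> (F \<longlongrightarrow> 0) at_bot"

definition hs_has_integral_on :: "(real \<Rightarrow> real) \<Rightarrow> (real \<Rightarrow> real) \<Rightarrow> real \<Rightarrow> real \<Rightarrow> real \<Rightarrow> bool" where
  "hs_has_integral_on h g a b I \<longleftrightarrow>
     (\<forall>e>0. \<exists>\<gamma>. gauge \<gamma> \<and>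
        (\<forall>p. p tagged_division_of {a..b} \<and> \<gamma> fine p \<longrightarrow>
             \<bar>(\<Sum>(t,K)\<in>p. h t * (g (Sup K) - g (Inf K))) - I\<bar> < e))"

definition hs_integral_on :: "(real \<Rightarrow> real) \<Rightarrow> (real \<Rightarrow> real) \<Rightarrow> real \<Rightarrow> real \<Rightarrow> real" where
  "hs_integral_on h g a b = (THE I. hs_has_integral_on h g a b I)"

definition hs_has_integral_R :: "(real \<Rightarrow> real) \<Rightarrow> (real \<Rightarrow> real) \<Rightarrow> real \<Rightarrow> bool" where
  "hs_has_integral_R h g I \<longleftrightarrow>
     (\<forall>a b. a \<le> b \<longrightarrow> (\<exists>J. hs_has_integral_on h g a b J)) \<and>
     ((\<lambda>(a,b). hs_integral_on h g a b) \<longlongrightarrow> I) (at_bot \<times>\<^sub>F at_top)"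

definition hs_integral_R :: "(real \<Rightarrow> real) \<Rightarrow> (real \<Rightarrow> real) \<Rightarrow> real" where
  "hs_integral_R h g = (THE I. hs_has_integral_R h g I)"

text \<open>Primitive of the reflected distribution f(x - .), where F is the primitive of f.\<close>
definition refl_prim :: "(real \<Rightarrow> real) \<Rightarrow> real \<Rightarrow> real \<Rightarrow> real" where
  "refl_prim F x = (\<lambda>y. Lim at_top F - F (x - y))"

text \<open>Convolution f*G of f in A_C (given by its primitive F) with G of bounded variation,
  as the product integral: H(oo) G(oo) - int H dG.\<close>
definition conv_AC :: "(real \<Rightarrow> real) \<Rightarrow> (real \<Rightarrow> real) \<Rightarrow> real \<Rightarrow> real" where
  "conv_AC F G x = Lim at_top (refl_prim F x) * Lim at_top G - hs_integral_R (refl_prim F x) G"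

end

theory Submission
  imports Defs
begin

lemma cont_meas_leb:
  fixes h :: "real \<Rightarrow> real"
  assumes "continuous_on UNIV h"
  shows "h \<in> borel_measurable lebesgue"
  using assms by (intro measurable_completion) (simp add: borel_measurable_continuous_onI)

lemma BC_bounded:
  assumes "B_C F"
  obtains M where "\<And>y. \<bar>F y\<bar> \<le> M"
proof -
  from assms obtain l where c: "continuous_on UNIV F" and lt: "(F \<longlongrightarrow> l) at_top"
    and lb: "(F \<longlongrightarrow> 0) at_bot" unfolding B_C_def C0_ext_def by auto
  have "eventually (\<lambda>y. dist (F y) l < 1) at_top" using lt by (simp add: tendsto_iff)
  then obtain b where b: "\<And>y. y \<ge> b \<Longrightarrow> dist (F y) l < 1" by (auto simp: eventually_at_top_linorder)
  have "eventually (\<lambda>y. dist (F y) 0 < 1) at_bot" using lb by (simp add: tendsto_iff)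
  then obtain a where a: "\<And>y. y \<le> a \<Longrightarrow> dist (F y) 0 < 1" by (auto simp: eventually_at_bot_linorder)
  obtain B where "B \<ge> 0" and B0: "\<And>y. y \<in> {a..b} \<Longrightarrow> norm (F y) \<le> B"
    by (rule continuous_on_compact_bound[of "{a..b}" F]) (auto intro: continuous_on_subset[OF c])
  have B: "\<bar>F y\<bar> \<le> B" if "y \<in> {a..b}" for y using B0[OF that] by simp
  show ?thesis
  proof (rule that[of "B + \<bar>l\<bar> + 1"])
    fix y
    show "\<bar>F y\<bar> \<le> B + \<bar>l\<bar> + 1"
    proof (cases "y \<le> a")
      case True then show ?thesis using a[of y] \<open>B \<ge> 0\<close> by (auto simp: dist_real_def)
    next
      case f1: False
      show ?thesis
      proof (cases "y \<ge> b")
        case True then show ?thesis using b[of y] f1 \<open>B \<ge> 0\<close> by (auto simp: dist_real_def)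
      next
        case False then show ?thesis using B[of y] f1 by (auto simp: dist_real_def)
      qed
    qed
  qed
qed

lemma integrable_bdd_mult:
  fixes h g :: "real \<Rightarrow> real"
  assumes "integrable lebesgue g" "continuous_on UNIV h" "\<And>y. \<bar>h y\<bar> \<le> M"
  shows "integrable lebesgue (\<lambda>y. h y * g y)"
proof (rule Bochner_Integration.integrable_bound[where f="\<lambda>y. M * g y" and M=lebesgue])
  show "integrable lebesgue (\<lambda>y. M * g y)" using assms by simp
  show "(\<lambda>y. h y * g y) \<in> borel_measurable lebesgue"
    using assms cont_meas_leb by (intro borel_measurable_times) auto
  show "AE y in lebesgue. norm (h y * g y) \<le> norm (M * g y)"
  proof (rule AE_I2)
    fix y
    have "\<bar>h y\<bar> \<le> \<bar>M\<bar>" using assms(3)[of y] by linarith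
    then show "norm (h y * g y) \<le> norm (M * g y)" by (auto simp: abs_mult intro!: mult_right_mono)
  qed
qed

lemma lim_Iic_top:
  fixes \<phi> :: "real \<Rightarrow> real"
  assumes "integrable lebesgue \<phi>"
  shows "((\<lambda>b. LINT y:{..b}|lebesgue. \<phi> y) \<longlongrightarrow> (LINT y|lebesgue. \<phi> y)) at_top"
  unfolding set_lebesgue_integral_def
proof (rule integral_dominated_convergence_at_top[where w="\<lambda>y. norm (\<phi> y)"])
  show "\<phi> \<in> borel_measurable lebesgue" using assms by auto
  show "(\<lambda>y. indicator {..t} y *\<^sub>R \<phi> y) \<in> borel_measurable lebesgue" for t
  proof -
    have "indicator {..t} \<in> borel_measurable lebesgue" by (intro measurable_completion) simp
    then show ?thesis using assms by (intro borel_measurable_scaleR) auto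
  qed
  show "integrable lebesgue (\<lambda>y. norm (\<phi> y))" using assms by auto
  show "AE y in lebesgue. ((\<lambda>t. indicator {..t} y *\<^sub>R \<phi> y) \<longlongrightarrow> \<phi> y) at_top"
  proof (rule AE_I2)
    fix y
    have "eventually (\<lambda>t. indicator {..t} y *\<^sub>R \<phi> y = \<phi> y) at_top"
      using eventually_ge_at_top[of y] by eventually_elim auto
    then show "((\<lambda>t. indicator {..t} y *\<^sub>R \<phi> y) \<longlongrightarrow> \<phi> y) at_top"
      by (rule tendsto_eventually)
  qed
  show "\<forall>\<^sub>F t in at_top. AE y in lebesgue. norm (indicator {..t} y *\<^sub>R \<phi> y) \<le> norm (\<phi> y)"
    by (intro always_eventually allI AE_I2) (auto simp: indicator_def)
qed

lemma lim_Iio_bot: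
  fixes \<phi> :: "real \<Rightarrow> real"
  assumes "integrable lebesgue \<phi>"
  shows "((\<lambda>a. LINT y:{..<a}|lebesgue. \<phi> y) \<longlongrightarrow> 0) at_bot"
  unfolding filterlim_at_bot_mirror set_lebesgue_integral_def
proof -
  have "((\<lambda>t. integral\<^sup>L lebesgue (\<lambda>y. indicator {..< -t} y *\<^sub>R \<phi> y)) \<longlongrightarrow> integral\<^sup>L lebesgue (\<lambda>y::real. 0::real)) at_top"
  proof (rule integral_dominated_convergence_at_top[where w="\<lambda>y. norm (\<phi> y)" and f="\<lambda>y. 0" and M=lebesgue and s="\<lambda>t y. indicator {..< -t} y *\<^sub>R \<phi> y"])
    show "(\<lambda>y. indicator {..< -t} y *\<^sub>R \<phi> y) \<in> borel_measurable lebesgue" for t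
    proof -
      have "indicator {..< -t} \<in> borel_measurable lebesgue" by (intro measurable_completion) simp
      then show ?thesis using assms by (intro borel_measurable_scaleR) auto
    qed
    show "integrable lebesgue (\<lambda>y. norm (\<phi> y))" using assms by auto
    show "AE y in lebesgue. ((\<lambda>t. indicator {..< -t} y *\<^sub>R \<phi> y) \<longlongrightarrow> 0) at_top"
    proof (rule AE_I2)
      fix y
      have "eventually (\<lambda>t. indicator {..< -t} y *\<^sub>R \<phi> y = 0) at_top"
        using eventually_ge_at_top[of "-y"] by eventually_elim (auto simp: indicator_def)
      then show "((\<lambda>t. indicator {..< -t} y *\<^sub>R \<phi> y) \<longlongrightarrow> 0) at_top"
        by (rule tendsto_eventually)
    qed
    show "\<forall>\<^sub>F t in at_top. AE y in lebesgue. norm (indicator {..< -t} y *\<^sub>R \<phi> y) \<le> norm (\<phi> y)"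
      by (intro always_eventually allI AE_I2) (auto simp: indicator_def)
  qed simp
  then show "((\<lambda>t. integral\<^sup>L lebesgue (\<lambda>y. indicator {..< -t} y *\<^sub>R \<phi> y)) \<longlongrightarrow> 0) at_top" by simp
qed

lemma leb_int_on:
  fixes \<phi> :: "real \<Rightarrow> real"
  assumes "integrable lebesgue \<phi>" "S \<in> sets lebesgue"
  shows "\<phi> integrable_on S" "integral S \<phi> = (LINT y:S|lebesgue. \<phi> y)"
proof -
  have si: "set_integrable lebesgue S \<phi>"
    unfolding set_integrable_def using assms by (intro integrable_mult_indicator) auto
  show "\<phi> integrable_on S" using set_lebesgue_integral_eq_integral(1)[OF si] .
  show "integral S \<phi> = (LINT y:S|lebesgue. \<phi> y)" using set_lebesgue_integral_eq_integral(2)[OF si] by simp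
qed

lemma ind_int:
  fixes \<phi> :: "real \<Rightarrow> real"
  assumes "integrable lebesgue \<phi>" "S \<in> sets lebesgue"
  shows "integrable lebesgue (\<lambda>y. indicator S y *\<^sub>R \<phi> y)"
  using assms by (intro integrable_mult_indicator) auto

lemma Icc_split:
  fixes \<phi> :: "real \<Rightarrow> real"
  assumes "integrable lebesgue \<phi>" "a \<le> b"
  shows "integral {a..b} \<phi> = (LINT y:{..b}|lebesgue. \<phi> y) - (LINT y:{..<a}|lebesgue. \<phi> y)"
proof -
  have "(LINT y:{..b}|lebesgue. \<phi> y) - (LINT y:{..<a}|lebesgue. \<phi> y)
      = (LINT y|lebesgue. indicator {..b} y *\<^sub>R \<phi> y - indicator {..<a} y *\<^sub>R \<phi> y)"
    unfolding set_lebesgue_integral_def using assms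
    by (intro Bochner_Integration.integral_diff[symmetric] ind_int) auto
  also have "\<dots> = (LINT y|lebesgue. indicator {a..b} y *\<^sub>R \<phi> y)"
    using assms(2) by (intro Bochner_Integration.integral_cong) (auto simp: indicator_def)
  also have "\<dots> = integral {a..b} \<phi>"
    using leb_int_on(2)[OF assms(1), of "{a..b}"] by (simp add: set_lebesgue_integral_def)
  finally show ?thesis by simp
qed

lemma G_diff:
  fixes g G :: "real \<Rightarrow> real"
  assumes g: "integrable lebesgue g" and G: "\<And>x. G x = (LINT y:{..x}|lebesgue. g y)"
    and "c \<le> d"
  shows "G d - G c = integral {c..d} g"
proof -
  have "G d - G c = (LINT y|lebesgue. indicator {..d} y *\<^sub>R g y - indicator {..c} y *\<^sub>R g y)"
    unfolding G set_lebesgue_integral_def using assms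
    by (intro Bochner_Integration.integral_diff[symmetric] ind_int) auto
  also have "\<dots> = (LINT y|lebesgue. indicator {c<..d} y *\<^sub>R g y)"
    using assms(3) by (intro Bochner_Integration.integral_cong) (auto simp: indicator_def)
  also have "\<dots> = integral {c<..d} g"
    using leb_int_on(2)[OF g, of "{c<..d}"] by (simp add: set_lebesgue_integral_def)
  also have "\<dots> = integral {c..d} g"
  proof (rule integral_spike_set)
    show "negligible {x \<in> {c<..d} - {c..d}. g x \<noteq> 0}" by (rule negligible_subset[of "{}"]) auto
    show "negligible {x \<in> {c..d} - {c<..d}. g x \<noteq> 0}"
      by (rule negligible_subset[of "{c}"]) auto
  qed
  finally show ?thesis .
qed

lemma abs_two:
  fixes S I J e :: real
  assumes "\<bar>S - I\<bar> < e" "\<bar>S - J\<bar> < e"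
  shows "\<bar>I - J\<bar> < 2 * e"
  using assms unfolding abs_less_iff by linarith

lemma hs_unique:
  assumes "hs_has_integral_on h g a b I" "hs_has_integral_on h g a b J"
  shows "I = J"
proof (rule ccontr)
  assume ne: "I \<noteq> J"
  define e where "e = \<bar>I - J\<bar> / 2"
  have e: "e > 0" using ne unfolding e_def by simp
  obtain \<gamma>1 where g1: "gauge \<gamma>1" "\<And>p. p tagged_division_of {a..b} \<and> \<gamma>1 fine p \<Longrightarrow>
     \<bar>(\<Sum>(t,K)\<in>p. h t * (g (Sup K) - g (Inf K))) - I\<bar> < e"
    using assms(1) e unfolding hs_has_integral_on_def by meson
  obtain \<gamma>2 where g2: "gauge \<gamma>2" "\<And>p. p tagged_division_of {a..b} \<and> \<gamma>2 fine p \<Longrightarrow>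
     \<bar>(\<Sum>(t,K)\<in>p. h t * (g (Sup K) - g (Inf K))) - J\<bar> < e"
    using assms(2) e unfolding hs_has_integral_on_def by meson
  obtain p where p: "p tagged_division_of {a..b}" "(\<lambda>x. \<gamma>1 x \<inter> \<gamma>2 x) fine p"
    using fine_division_exists_real[OF gauge_Int[OF g1(1) g2(1)]] by blast
  have "\<bar>(\<Sum>(t,K)\<in>p. h t * (g (Sup K) - g (Inf K))) - I\<bar> < e"
    using g1(2) p unfolding fine_Int by blast
  moreover have "\<bar>(\<Sum>(t,K)\<in>p. h t * (g (Sup K) - g (Inf K))) - J\<bar> < e"
    using g2(2) p unfolding fine_Int by blast
  ultimately have "\<bar>I - J\<bar> < 2 * e" by (rule abs_two)
  then show False unfolding e_def by simp
qed

lemma lim_Icc: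
  fixes \<phi> :: "real \<Rightarrow> real"
  assumes "integrable lebesgue \<phi>"
  shows "((\<lambda>(a,b). integral {a..b} \<phi>) \<longlongrightarrow> (LINT y|lebesgue. \<phi> y)) (at_bot \<times>\<^sub>F at_top)"
proof -
  have ev: "eventually (\<lambda>p::real\<times>real. fst p \<le> snd p) (at_bot \<times>\<^sub>F at_top)"
  proof -
    have "eventually (\<lambda>a::real. a \<le> 0) at_bot" by (rule eventually_le_at_bot)
    moreover have "eventually (\<lambda>b::real. b \<ge> 0) at_top" by (rule eventually_ge_at_top)
    ultimately show ?thesis unfolding eventually_prod_filter
      by (intro exI[where x="\<lambda>a::real. a \<le> 0"] exI[where x="\<lambda>b::real. b \<ge> 0"] conjI) auto
  qed
  have l1: "((\<lambda>p. LINT y:{..snd p}|lebesgue. \<phi> y) \<longlongrightarrow> (LINT y|lebesgue. \<phi> y)) (at_bot \<times>\<^sub>F at_top)"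
    by (rule filterlim_compose[OF lim_Iic_top[OF assms] filterlim_snd])
  have l2: "((\<lambda>p. LINT y:{..<fst p}|lebesgue. \<phi> y) \<longlongrightarrow> 0) (at_bot \<times>\<^sub>F at_top)"
    by (rule filterlim_compose[OF lim_Iio_bot[OF assms] filterlim_fst])
  have "((\<lambda>p. (LINT y:{..snd p}|lebesgue. \<phi> y) - (LINT y:{..<fst p}|lebesgue. \<phi> y)) \<longlongrightarrow> (LINT y|lebesgue. \<phi> y)) (at_bot \<times>\<^sub>F at_top)"
    using tendsto_diff[OF l1 l2] by simp
  moreover have "eventually (\<lambda>p. (LINT y:{..snd p}|lebesgue. \<phi> y) - (LINT y:{..<fst p}|lebesgue. \<phi> y) = (\<lambda>(a,b). integral {a..b} \<phi>) p) (at_bot \<times>\<^sub>F at_top)"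
    using ev by eventually_elim (auto simp: Icc_split[OF assms])
  ultimately show ?thesis by (rule Lim_transform_eventually)
qed

lemma tdiv_piece:
  fixes p :: "(real \<times> real set) set"
  assumes "p tagged_division_of {a..b}" "(t,K) \<in> p"
  obtains c d where "K = {c..d}" "c \<le> d" "Sup K = d" "Inf K = c" "t \<in> K" "K \<subseteq> {a..b}"
proof -
  from tagged_division_ofD(4)[OF assms] obtain c d where K: "K = cbox c d" by blast
  have tK: "t \<in> K" using tagged_division_ofD(2)[OF assms] .
  then have cd: "c \<le> d" using K by auto
  show ?thesis
    by (rule that[of c d]) (use K cd tK tagged_division_ofD(3)[OF assms] in auto)
qed

lemma hs_on:
  fixes g G H :: "real \<Rightarrow> real"
  assumes g: "integrable lebesgue g" and G: "\<And>x. G x = (LINT y:{..x}|lebesgue. g y)"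
    and Hc: "continuous_on UNIV H" and Hb: "\<And>y. \<bar>H y\<bar> \<le> M"
  shows "hs_has_integral_on H G a b (integral {a..b} (\<lambda>y. H y * g y))"
  unfolding hs_has_integral_on_def
proof (intro allI impI)
  fix e :: real assume e: "e > 0"
  define N where "N = (LINT y|lebesgue. \<bar>g y\<bar>)"
  have N0: "N \<ge> 0" unfolding N_def by simp
  define \<eta> where "\<eta> = e / (N + 1)"
  have \<eta>: "\<eta> > 0" unfolding \<eta>_def using e N0 by simp
  have \<eta>N: "\<eta> * N < e"
  proof -
    have "\<eta> * N = e * (N / (N + 1))" unfolding \<eta>_def by simp
    also have "\<dots> < e * 1" using e N0 by (intro mult_strict_left_mono) auto
    finally show ?thesis by simp
  qed
  have "uniformly_continuous_on {a..b} H"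
    by (rule compact_uniformly_continuous) (auto intro: continuous_on_subset[OF Hc])
  then obtain \<delta> where \<delta>: "\<delta> > 0" "\<And>s t. s \<in> {a..b} \<Longrightarrow> t \<in> {a..b} \<Longrightarrow> dist t s < \<delta> \<Longrightarrow> dist (H t) (H s) < \<eta>"
    unfolding uniformly_continuous_on_def using \<eta> by metis
  define \<Phi> where "\<Phi> = (\<lambda>y. H y * g y)"
  have \<Phi>i: "integrable lebesgue \<Phi>" unfolding \<Phi>_def by (rule integrable_bdd_mult[OF g Hc Hb])
  have gai: "integrable lebesgue (\<lambda>y. \<eta> * \<bar>g y\<bar>)" using g by simp
  show "\<exists>\<gamma>. gauge \<gamma> \<and> (\<forall>p. p tagged_division_of {a..b} \<and> \<gamma> fine p \<longrightarrow>
        \<bar>(\<Sum>(t,K)\<in>p. H t * (G (Sup K) - G (Inf K))) - integral {a..b} (\<lambda>y. H y * g y)\<bar> < e)"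
  proof (intro exI[of _ "\<lambda>t. ball t \<delta>"] conjI allI impI)
    show "gauge (\<lambda>t. ball t \<delta>)" using \<delta>(1) by (rule gauge_ball)
    fix p assume p: "p tagged_division_of {a..b} \<and> (\<lambda>t. ball t \<delta>) fine p"
    then have pt: "p tagged_division_of cbox a b" by simp
    have fin: "finite p" using p by blast
    have \<Phi>ab: "\<Phi> integrable_on cbox a b" by (rule leb_int_on(1)[OF \<Phi>i]) simp
    have gab: "(\<lambda>y. \<eta> * \<bar>g y\<bar>) integrable_on cbox a b" by (rule leb_int_on(1)[OF gai]) simp
    have I1: "integral {a..b} \<Phi> = (\<Sum>(t,K)\<in>p. integral K \<Phi>)"
      using integral_combine_tagged_division_topdown[OF \<Phi>ab pt] by simp
    have I2: "integral {a..b} (\<lambda>y. \<eta> * \<bar>g y\<bar>) = (\<Sum>(t,K)\<in>p. integral K (\<lambda>y. \<eta> * \<bar>g y\<bar>))"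
      using integral_combine_tagged_division_topdown[OF gab pt] by simp
    have piece: "\<bar>H t * (G (Sup K) - G (Inf K)) - integral K \<Phi>\<bar> \<le> integral K (\<lambda>y. \<eta> * \<bar>g y\<bar>)"
      if tK: "(t,K) \<in> p" for t K
    proof -
      obtain c d where cd: "K = {c..d}" "c \<le> d" "Sup K = d" "Inf K = c" "t \<in> K" "K \<subseteq> {a..b}"
        using tdiv_piece[OF conjunct1[OF p] tK] by blast
      have Kb: "K \<subseteq> ball t \<delta>" using p tK unfolding fine_def by blast
      have Ks: "K \<in> sets lebesgue" using cd(1) by simp
      have gi: "g integrable_on K" by (rule leb_int_on(1)[OF g Ks])
      have \<Phi>K: "\<Phi> integrable_on K" by (rule leb_int_on(1)[OF \<Phi>i Ks])
      have gti: "(\<lambda>y. H t * g y) integrable_on K" using integrable_on_cmult_left[OF gi, of "H t"] by simp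
      have gaK: "(\<lambda>y. \<eta> * \<bar>g y\<bar>) integrable_on K" by (rule leb_int_on(1)[OF gai Ks])
      have "H t * (G (Sup K) - G (Inf K)) = H t * integral K g"
        using G_diff[OF g G cd(2)] cd by simp
      also have "\<dots> = integral K (\<lambda>y. H t * g y)" by simp
      finally have eq: "H t * (G (Sup K) - G (Inf K)) - integral K \<Phi> = integral K (\<lambda>y. H t * g y - \<Phi> y)"
        using Henstock_Kurzweil_Integration.integral_diff[OF gti \<Phi>K] by simp
      have "norm (integral K (\<lambda>y. H t * g y - \<Phi> y)) \<le> integral K (\<lambda>y. \<eta> * \<bar>g y\<bar>)"
      proof (rule integral_norm_bound_integral)
        show "(\<lambda>y. H t * g y - \<Phi> y) integrable_on K"
          by (rule Henstock_Kurzweil_Integration.integrable_diff[OF gti \<Phi>K])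
        show "(\<lambda>y. \<eta> * \<bar>g y\<bar>) integrable_on K" by (rule gaK)
        fix y assume yK: "y \<in> K"
        have "dist t y < \<delta>" using Kb yK by (simp add: subset_iff)
        moreover have "t \<in> {a..b}" "y \<in> {a..b}" using cd yK by auto
        ultimately have "dist (H y) (H t) < \<eta>" using \<delta>(2)[of t y] by (simp add: dist_commute)
        then have "\<bar>H t - H y\<bar> \<le> \<eta>" by (simp add: dist_real_def abs_minus_commute)
        then have "\<bar>H t - H y\<bar> * \<bar>g y\<bar> \<le> \<eta> * \<bar>g y\<bar>" by (rule mult_right_mono) simp
        then show "norm (H t * g y - \<Phi> y) \<le> \<eta> * \<bar>g y\<bar>"
          unfolding \<Phi>_def by (simp add: left_diff_distrib[symmetric] abs_mult)
      qed
      then show ?thesis using eq by simp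
    qed
    have "\<bar>(\<Sum>(t,K)\<in>p. H t * (G (Sup K) - G (Inf K))) - integral {a..b} \<Phi>\<bar>
        = \<bar>\<Sum>(t,K)\<in>p. H t * (G (Sup K) - G (Inf K)) - integral K \<Phi>\<bar>"
      unfolding I1 by (simp add: sum_subtractf[symmetric] case_prod_beta)
    also have "\<dots> \<le> (\<Sum>(t,K)\<in>p. \<bar>H t * (G (Sup K) - G (Inf K)) - integral K \<Phi>\<bar>)"
      by (rule order_trans[OF sum_abs[of "\<lambda>(t,K). H t * (G (Sup K) - G (Inf K)) - integral K \<Phi>" p]], rule eq_refl, rule sum.cong) auto
    also have "\<dots> \<le> (\<Sum>(t,K)\<in>p. integral K (\<lambda>y. \<eta> * \<bar>g y\<bar>))"
      by (rule sum_mono) (use piece in auto)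
    also have "\<dots> = integral {a..b} (\<lambda>y. \<eta> * \<bar>g y\<bar>)" using I2 by simp
    also have "\<dots> = \<eta> * integral {a..b} (\<lambda>y. \<bar>g y\<bar>)" by simp
    also have "\<dots> \<le> \<eta> * N"
    proof (rule mult_left_mono)
      have "integral {a..b} (\<lambda>y. \<bar>g y\<bar>) = (LINT y|lebesgue. indicator {a..b} y *\<^sub>R \<bar>g y\<bar>)"
        using leb_int_on(2)[of "\<lambda>y. \<bar>g y\<bar>" "{a..b}"] g by (simp add: set_lebesgue_integral_def)
      also have "\<dots> \<le> N" unfolding N_def
        using g by (intro integral_mono ind_int) (auto simp: indicator_def)
      finally show "integral {a..b} (\<lambda>y. \<bar>g y\<bar>) \<le> N" .
      show "0 \<le> \<eta>" using \<eta> by simp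
    qed
    also have "\<dots> < e" by (rule \<eta>N)
    finally show "\<bar>(\<Sum>(t,K)\<in>p. H t * (G (Sup K) - G (Inf K))) - integral {a..b} (\<lambda>y. H y * g y)\<bar> < e"
      unfolding \<Phi>_def .
  qed
qed

lemma lim_shift_bot: "filterlim (\<lambda>y::real. c - y) at_bot at_top"
  unfolding filterlim_at_bot
proof
  fix Z :: real
  show "eventually (\<lambda>y. c - y \<le> Z) at_top"
    using eventually_ge_at_top[of "c - Z"] by eventually_elim simp
qed

lemma lim_shift_top: "filterlim (\<lambda>t::real. t - c) at_top at_top"
  unfolding filterlim_at_top
proof
  fix Z :: real
  show "eventually (\<lambda>t. Z \<le> t - c) at_top"
    using eventually_ge_at_top[of "Z + c"] by eventually_elim simp
qed

lemma lim_shift_bot2: "filterlim (\<lambda>t::real. - t - c) at_bot at_top"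
  unfolding filterlim_at_bot
proof
  fix Z :: real
  show "eventually (\<lambda>t. - t - c \<le> Z) at_top"
    using eventually_ge_at_top[of "- c - Z"] by eventually_elim simp
qed

lemma per_x:
  fixes F g G H :: "real \<Rightarrow> real"
  assumes g: "integrable lebesgue g" and G: "\<And>x. G x = (LINT y:{..x}|lebesgue. g y)"
    and Hc: "continuous_on UNIV H" and Hb: "\<And>y. \<bar>H y\<bar> \<le> M"
  shows "hs_has_integral_R H G (LINT y|lebesgue. H y * g y)"
    "hs_integral_R H G = (LINT y|lebesgue. H y * g y)"
proof -
  have Hi: "integrable lebesgue (\<lambda>y. H y * g y)" by (rule integrable_bdd_mult[OF g Hc Hb])
  have eq: "hs_integral_on H G a b = integral {a..b} (\<lambda>y. H y * g y)" for a b
    unfolding hs_integral_on_def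
    by (rule the_equality, rule hs_on[OF g G Hc Hb], rule hs_unique[OF _ hs_on[OF g G Hc Hb]])
  have lim: "((\<lambda>(a,b). hs_integral_on H G a b) \<longlongrightarrow> (LINT y|lebesgue. H y * g y)) (at_bot \<times>\<^sub>F at_top)"
    unfolding eq by (rule lim_Icc[OF Hi])
  show R: "hs_has_integral_R H G (LINT y|lebesgue. H y * g y)"
    unfolding hs_has_integral_R_def using lim hs_on[OF g G Hc Hb] by blast
  have nb: "(at_bot \<times>\<^sub>F at_top :: (real \<times> real) filter) \<noteq> bot" by (simp add: prod_filter_eq_bot)
  show "hs_integral_R H G = (LINT y|lebesgue. H y * g y)"
    unfolding hs_integral_R_def
  proof (rule the_equality)
    show "hs_has_integral_R H G (LINT y|lebesgue. H y * g y)" by (rule R)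
    fix I assume "hs_has_integral_R H G I"
    then have "((\<lambda>(a,b). hs_integral_on H G a b) \<longlongrightarrow> I) (at_bot \<times>\<^sub>F at_top)"
      unfolding hs_has_integral_R_def by blast
    then show "I = (LINT y|lebesgue. H y * g y)" by (rule tendsto_unique[OF nb _ lim])
  qed
qed

theorem mainTheorem13:
  fixes F g G :: "real \<Rightarrow> real"
  assumes F: "B_C F"
    and g: "integrable lebesgue g"
    and G: "\<And>x. G x = (LINT y:{..x}|lebesgue. g y)"
  shows "C0_ext (conv_AC F G) \<and>
         (\<forall>x. hs_has_integral_R (refl_prim F x) G (hs_integral_R (refl_prim F x) G)) \<and>
         (\<forall>x. conv_AC F G x = (LINT y|lebesgue. F (x - y) * g y))"
proof -
  obtain M where M: "\<And>y. \<bar>F y\<bar> \<le> M" using BC_bounded[OF F] by blast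
  from F obtain l where Fc: "continuous_on UNIV F" and Fl: "(F \<longlongrightarrow> l) at_top"
    and F0: "(F \<longlongrightarrow> 0) at_bot" unfolding B_C_def C0_ext_def by auto
  define L where "L = Lim at_top F"
  have FL: "(F \<longlongrightarrow> L) at_top" unfolding L_def using Fl by (simp add: tendsto_Lim)
  have Gfun: "G = (\<lambda>x. LINT y:{..x}|lebesgue. g y)" using G by auto
  have GL: "Lim at_top G = (LINT y|lebesgue. g y)"
    unfolding Gfun by (rule tendsto_Lim) (simp_all add: lim_Iic_top[OF g])
  have Fxc: "continuous_on UNIV (\<lambda>y. F (x - y))" for x
    by (rule continuous_on_compose2[OF Fc]) (auto intro!: continuous_intros)
  have Fxi: "integrable lebesgue (\<lambda>y. F (x - y) * g y)" for x
    by (rule integrable_bdd_mult[OF g Fxc M])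
  define \<Psi> where "\<Psi> x = (LINT y|lebesgue. F (x - y) * g y)" for x
  have HR: "hs_has_integral_R (refl_prim F x) G (hs_integral_R (refl_prim F x) G)
       \<and> conv_AC F G x = \<Psi> x" for x
  proof -
    define H where "H = refl_prim F x"
    have Hdef: "H y = L - F (x - y)" for y unfolding H_def refl_prim_def L_def by simp
    have Hc: "continuous_on UNIV H" unfolding Hdef[abs_def] by (intro continuous_intros Fxc)
    have Hb: "\<bar>H y\<bar> \<le> \<bar>L\<bar> + M" for y unfolding Hdef using M[of "x - y"] by linarith
    note P = per_x[OF g G Hc Hb]
    have HL: "Lim at_top H = L"
    proof (rule tendsto_Lim)
      have "((\<lambda>y. F (x - y)) \<longlongrightarrow> 0) at_top" by (rule filterlim_compose[OF F0 lim_shift_bot])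
      then have "((\<lambda>y. L - F (x - y)) \<longlongrightarrow> L - 0) at_top" by (intro tendsto_diff tendsto_const)
      then show "(H \<longlongrightarrow> L) at_top" unfolding Hdef[abs_def] by simp
    qed simp
    have "(LINT y|lebesgue. H y * g y) = (LINT y|lebesgue. L * g y - F (x - y) * g y)"
      unfolding Hdef by (simp add: left_diff_distrib)
    also have "\<dots> = L * (LINT y|lebesgue. g y) - \<Psi> x"
      unfolding \<Psi>_def using g Fxi by (subst Bochner_Integration.integral_diff) auto
    finally have HI: "(LINT y|lebesgue. H y * g y) = L * (LINT y|lebesgue. g y) - \<Psi> x" .
    have "conv_AC F G x = \<Psi> x"
      unfolding conv_AC_def H_def[symmetric] HL GL P(2) HI by simp
    then show ?thesis using P unfolding H_def by simp
  qed
  have conv: "conv_AC F G = \<Psi>" using HR by auto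
  have cont: "continuous_on UNIV \<Psi>"
  proof (rule continuous_at_imp_continuous_on, intro ballI continuous_at_sequentiallyI)
    fix x :: real and u :: "nat \<Rightarrow> real" assume u: "u \<longlonglongrightarrow> x"
    show "(\<lambda>n. \<Psi> (u n)) \<longlonglongrightarrow> \<Psi> x"
      unfolding \<Psi>_def
    proof (rule integral_dominated_convergence[where w="\<lambda>y. M * \<bar>g y\<bar>"])
      show "(\<lambda>y. F (x - y) * g y) \<in> borel_measurable lebesgue" using Fxi by auto
      show "(\<lambda>y. F (u n - y) * g y) \<in> borel_measurable lebesgue" for n using Fxi by auto
      show "integrable lebesgue (\<lambda>y. M * \<bar>g y\<bar>)" using g by simp
      show "AE y in lebesgue. (\<lambda>n. F (u n - y) * g y) \<longlonglongrightarrow> F (x - y) * g y"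
      proof (rule AE_I2)
        fix y
        have "isCont F (x - y)" using Fc by (simp add: continuous_on_eq_continuous_at)
        moreover have "(\<lambda>n. u n - y) \<longlonglongrightarrow> x - y" by (intro tendsto_diff u tendsto_const)
        ultimately have "(\<lambda>n. F (u n - y)) \<longlonglongrightarrow> F (x - y)" by (rule isCont_tendsto_compose)
        then show "(\<lambda>n. F (u n - y) * g y) \<longlonglongrightarrow> F (x - y) * g y" by (intro tendsto_mult_right)
      qed
      show "AE y in lebesgue. norm (F (u n - y) * g y) \<le> M * \<bar>g y\<bar>" for n
        using M[of "u n - _"] by (auto intro!: AE_I2 mult_right_mono simp: abs_mult)
    qed
  qed
  have ltop: "(\<Psi> \<longlongrightarrow> L * (LINT y|lebesgue. g y)) at_top"
  proof -
    have "((\<lambda>t. LINT y|lebesgue. F (t - y) * g y) \<longlongrightarrow> (LINT y|lebesgue. L * g y)) at_top"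
    proof (rule integral_dominated_convergence_at_top[where w="\<lambda>y. M * \<bar>g y\<bar>"])
      show "(\<lambda>y. L * g y) \<in> borel_measurable lebesgue" using g by auto
      show "(\<lambda>y. F (t - y) * g y) \<in> borel_measurable lebesgue" for t using Fxi by auto
      show "integrable lebesgue (\<lambda>y. M * \<bar>g y\<bar>)" using g by simp
      show "AE y in lebesgue. ((\<lambda>t. F (t - y) * g y) \<longlongrightarrow> L * g y) at_top"
      proof (rule AE_I2)
        fix y
        have "((\<lambda>t. F (t - y)) \<longlongrightarrow> L) at_top" by (rule filterlim_compose[OF FL lim_shift_top])
        then show "((\<lambda>t. F (t - y) * g y) \<longlongrightarrow> L * g y) at_top" by (intro tendsto_mult_right)
      qed
      show "\<forall>\<^sub>F t in at_top. AE y in lebesgue. norm (F (t - y) * g y) \<le> M * \<bar>g y\<bar>"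
        using M by (intro always_eventually allI AE_I2) (auto intro!: mult_right_mono simp: abs_mult)
    qed
    then show ?thesis unfolding \<Psi>_def[abs_def] by simp
  qed
  have lbot: "(\<Psi> \<longlongrightarrow> 0) at_bot"
    unfolding filterlim_at_bot_mirror
  proof -
    have "((\<lambda>t. LINT y|lebesgue. F (- t - y) * g y) \<longlongrightarrow> (LINT y|lebesgue. 0 * g y)) at_top"
    proof (rule integral_dominated_convergence_at_top[where w="\<lambda>y. M * \<bar>g y\<bar>"])
      show "(\<lambda>y. 0 * g y) \<in> borel_measurable lebesgue" by simp
      show "(\<lambda>y. F (- t - y) * g y) \<in> borel_measurable lebesgue" for t using Fxi by auto
      show "integrable lebesgue (\<lambda>y. M * \<bar>g y\<bar>)" using g by simp
      show "AE y in lebesgue. ((\<lambda>t. F (- t - y) * g y) \<longlongrightarrow> 0 * g y) at_top"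
      proof (rule AE_I2)
        fix y
        have "((\<lambda>t. F (- t - y)) \<longlongrightarrow> 0) at_top" by (rule filterlim_compose[OF F0 lim_shift_bot2])
        then show "((\<lambda>t. F (- t - y) * g y) \<longlongrightarrow> 0 * g y) at_top" by (intro tendsto_mult_right)
      qed
      show "\<forall>\<^sub>F t in at_top. AE y in lebesgue. norm (F (- t - y) * g y) \<le> M * \<bar>g y\<bar>"
        using M by (intro always_eventually allI AE_I2) (auto intro!: mult_right_mono simp: abs_mult)
    qed
    then show "((\<lambda>x. \<Psi> (- x)) \<longlongrightarrow> 0) at_top" unfolding \<Psi>_def by simp
  qed
  have "C0_ext (conv_AC F G)" unfolding conv C0_ext_def using cont ltop lbot by blast
  then show ?thesis using HR \<Psi>_def by auto
qed

end
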